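(* Let $\rho_0\in L^\infty$ be supported in $\overline{B_1}$ and let $\rho$ be the corresponding solution. If $\lim_{t\to\infty}\mathcal G(\rho(t,\cdot))=0$ for every accuracy parameter $\kappa\in(0,1)$, then $\rho(t,\cdot)\rightharpoonup0$ weakly in $L^2(B_1)$ as $t\to\infty$.
   Context: $B_1\subset\mathbb R^2$ open unit disk, $B_\varepsilon(x)$ open disk of radius $\varepsilon$ at $x$, polar coordinates $(r,\theta)$. Velocity $u(r,\theta)=2\pi r^2(\sin\theta,-\cos\theta)$; $\rho(t,\cdot)$ solves $\partial_t\rho+\operatorname{div}(u\rho)=0$, $\rho(0)=\rho_0$, explicitly $\rho(t,r,\theta)=\rho_0(r,\theta+2\pi tr)$, so $\|\rho(t)\|_{L^\infty}=\|\rho_0\|_{L^\infty}$. Geometric mixing scale with accuracy $\kappa$: for bounded $f$ supported in $\overline{B_1}$ (extended by zero), $\mathcal G(f)$ (depending on $\kappa$) is the infimum of $\varepsilon>0$ with $\big|\frac1{|B_\varepsilon|}\int_{B_\varepsilon(x)}f\big|\le\kappa\|f\|_{L^\infty(B_1)}$ for all $x\in\mathbb R^2$. *)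

theory Defs
  imports "HOL-Analysis.Analysis"
begin

text \<open>We identify \<open>\<real>\<^sup>2\<close> with \<open>\<complex>\<close>; a point with polar coordinates (r, theta)
  is \<open>r * cis theta\<close>.  The explicit solution
  \<open>rho(t,r,theta) = rho0(r, theta + 2 pi t r)\<close> is then
  \<open>rho(t,x) = rho0(x * cis(2 pi t |x|))\<close>.\<close>

definition sol :: "(complex \<Rightarrow> real) \<Rightarrow> real \<Rightarrow> complex \<Rightarrow> real" where
  "sol rho0 t x = rho0 (x * cis (2 * pi * t * norm x))"

definition Linf_B1 :: "(complex \<Rightarrow> real) \<Rightarrow> real" where
  "Linf_B1 f = Inf {C. AE x in lborel. x \<in> ball 0 1 \<longrightarrow> \<bar>f x\<bar> \<le> C}"

text \<open>Geometric mixing scale with accuracy \<open>\<kappa>\<close>; \<open>f\<close> is extended by zero outside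
  the closed unit disk.\<close>
definition mix_scale :: "real \<Rightarrow> (complex \<Rightarrow> real) \<Rightarrow> real" where
  "mix_scale \<kappa> f = Inf {\<epsilon>. \<epsilon> > 0 \<and> (\<forall>x. \<bar>(1 / measure lborel (ball x \<epsilon>)) *
       (LINT y:ball x \<epsilon>|lborel. indicator (cball 0 1) y * f y)\<bar> \<le> \<kappa> * Linf_B1 f)}"

end

theory Submission
  imports Defs
begin

definition twist :: "real \<Rightarrow> complex \<Rightarrow> complex" where
  "twist a x = x * cis (a * norm x)"

lemma norm_twist[simp]: "norm (twist a x) = norm x"
  by (simp add: twist_def norm_mult)

lemma twist_inv[simp]: "twist (-a) (twist a x) = x"
  by (simp add: twist_def norm_mult mult.assoc cis_mult)

lemma continuous_twist: "continuous_on UNIV (twist a)"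
  unfolding twist_def by (intro continuous_intros)

lemma cis_diff_le: "norm (cis s - cis r) \<le> \<bar>s - r\<bar>"
proof -
  have "cis s - cis r = cis r * (cis (s - r) - 1)"
    by (simp add: algebra_simps cis_mult)
  moreover have "cis (s - r) = exp (\<i> * complex_of_real (s - r))" by (simp add: cis_conv_exp)
  ultimately have "norm (cis s - cis r) = norm (exp (\<i> * complex_of_real (s - r)) - 1)"
    by (simp add: norm_mult)
  also have "\<dots> = 2 * \<bar>sin ((s - r) / 2)\<bar>"
    by (rule dist_exp_i_1)
  also have "\<dots> \<le> 2 * \<bar>(s - r) / 2\<bar>" using abs_sin_x_le_abs_x[of "(s-r)/2"] by linarith
  finally show ?thesis by simp
qed

lemma twist_lip: "norm (twist a y - twist a x) \<le> (1 + \<bar>a\<bar> * norm x) * norm (y - x)"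
proof -
  have e: "twist a y - twist a x = (y - x) * cis (a * norm y) + x * (cis (a*norm y) - cis (a * norm x))"
    by (simp add: twist_def algebra_simps)
  have 1: "norm (twist a y - twist a x) \<le> norm (y - x) + norm x * norm (cis (a*norm y) - cis (a * norm x))"
    unfolding e by (metis norm_cis norm_mult mult.right_neutral norm_triangle_ineq norm_mult)
  have "norm (cis (a*norm y) - cis (a * norm x)) \<le> \<bar>a * norm y - a * norm x\<bar>"
    by (rule cis_diff_le)
  also have "\<bar>a * norm y - a * norm x\<bar> \<le> \<bar>a\<bar> * norm (y - x)"
    by (metis abs_mult abs_ge_zero mult_left_mono norm_triangle_ineq3 right_diff_distrib)
  finally have "norm x * norm (cis (a*norm y) - cis (a * norm x)) \<le> norm x * (\<bar>a\<bar> * norm (y - x))"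
    by (simp add: mult_left_mono)
  with 1 show ?thesis by (simp add: algebra_simps)
qed

lemma twist_vimage_negligible:
  assumes "negligible N"
  shows "negligible {x. twist a x \<in> N}"
proof -
  have "{x. twist a x \<in> N} = twist (-a) ` N"
    using twist_inv[of "-a"] by (auto simp: image_iff intro!: exI[of _ "twist a _"]) (metis minus_minus twist_inv)
  moreover have "negligible (twist (-a) ` N)"
    apply (rule negligible_locally_Lipschitz_image[OF _ assms])
     apply simp
    apply (rule_tac x=UNIV in exI, rule_tac x="1 + \<bar>a\<bar> * norm x" in exI)
    using twist_lip[of "-a"] by auto
  ultimately show ?thesis by simp
qed

lemma twist_AE:
  assumes "AE x in lborel. P x"
  shows "AE x in lborel. P (twist a x)"
proof -
  from assms obtain N where N: "{x \<in> space lborel. \<not> P x} \<subseteq> N" "N \<in> null_sets lborel"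
    using assms by (auto simp: eventually_ae_filter)
  have "negligible N" using N(2)
    by (simp add: negligible_iff_null_sets null_sets_completionI)
  then have "negligible {x. twist a x \<in> N}" by (rule twist_vimage_negligible)
  then have "{x. twist a x \<in> N} \<in> null_sets lebesgue" by (simp add: negligible_iff_null_sets)
  then have "AE x in lebesgue. P (twist a x)"
    by (rule AE_I') (use N in auto)
  then show ?thesis by (simp add: AE_completion_iff)
qed

lemma sol_twist: "sol rho0 t = (\<lambda>x. rho0 (twist (2*pi*t) x))"
  by (auto simp: sol_def twist_def fun_eq_iff)

lemma sol_meas:
  assumes "rho0 \<in> borel_measurable lborel"
  shows "sol rho0 t \<in> borel_measurable lborel"
proof -
  have "twist (2*pi*t) \<in> borel_measurable borel"
    by (rule borel_measurable_continuous_onI[OF continuous_twist])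
  then have "twist (2*pi*t) \<in> lborel \<rightarrow>\<^sub>M lborel" by simp
  then show ?thesis unfolding sol_twist using assms
    by (rule measurable_compose)
qed


lemma bdd_integrable:
  fixes g :: "'a \<Rightarrow> real"
  assumes "g \<in> borel_measurable M" "A \<in> sets M" "emeasure M A < \<infinity>"
    and "\<And>x. x \<in> space M \<Longrightarrow> \<bar>g x\<bar> \<le> B * indicator A x"
  shows "integrable M g"
proof (rule Bochner_Integration.integrable_bound[where f="\<lambda>x. B * indicator A x"])
  show "integrable M (\<lambda>x. B * indicator A x)"
    using assms by (intro integrable_mult_right integrable_real_indicator) auto
  show "AE x in M. norm (g x) \<le> norm (B * indicat_real A x)"
    using assms(4) by (intro AE_I2) (smt (verit, ccfv_SIG) real_norm_def)
qed (use assms in auto)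

lemma measure_ball_c: "0 \<le> r \<Longrightarrow> measure lborel (ball (c::complex) r) = pi * r^2"
  using emeasure_ball[of r c] by (simp add: measure_def unit_ball_vol_2)

lemma measure_cball_c: "0 \<le> r \<Longrightarrow> measure lborel (cball (c::complex) r) = pi * r^2"
  using emeasure_cball[of r c] by (simp add: measure_def unit_ball_vol_2)

lemma sphere_null: "sphere (c::complex) r \<in> null_sets lborel"
  using negligible_sphere[of c r]
  by (auto simp: null_sets_completion_iff negligible_iff_null_sets negligible_convex_frontier)

lemma ball_not_null: "\<not> (AE x in lborel. x \<notin> ball (0::complex) 1)"
proof
  assume "AE x in lborel. x \<notin> ball (0::complex) 1"
  then have "emeasure lborel (ball (0::complex) 1) = 0"
    by (subst (asm) AE_iff_measurable[of "ball 0 1"]) auto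
  then show False using emeasure_ball[of 1 "0::complex"] by (simp add: unit_ball_vol_2)
qed

definition LS :: "(complex \<Rightarrow> real) \<Rightarrow> real set" where
  "LS f = {C. AE x in lborel. x \<in> ball 0 1 \<longrightarrow> \<bar>f x\<bar> \<le> C}"

lemma LS_nonneg: "C \<in> LS f \<Longrightarrow> 0 \<le> C"
proof (rule ccontr)
  assume "C \<in> LS f" "\<not> 0 \<le> C"
  then have "AE x in lborel. x \<notin> ball (0::complex) 1"
    by (auto simp: LS_def elim!: eventually_mono)
  with ball_not_null show False by blast
qed

lemma Linf_le:
  assumes "AE x in lborel. \<bar>f x\<bar> \<le> M"
  shows "Linf_B1 f \<le> M" "0 \<le> Linf_B1 f"
proof -
  have M: "M \<in> LS f" using assms by (auto simp: LS_def elim!: eventually_mono)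
  have bb: "bdd_below (LS f)" using LS_nonneg by (auto simp: bdd_below_def)
  show "Linf_B1 f \<le> M" unfolding Linf_B1_def LS_def[symmetric]
    by (rule cInf_lower[OF M bb])
  show "0 \<le> Linf_B1 f" unfolding Linf_B1_def LS_def[symmetric]
    using M LS_nonneg by (intro cInf_greatest) auto
qed

lemma Linf_attained:
  assumes "AE x in lborel. \<bar>f x\<bar> \<le> M"
  shows "AE x in lborel. x \<in> ball 0 1 \<longrightarrow> \<bar>f x\<bar> \<le> Linf_B1 f"
proof -
  have M: "M \<in> LS f" using assms by (auto simp: LS_def elim!: eventually_mono)
  have bb: "bdd_below (LS f)" using LS_nonneg by (auto simp: bdd_below_def)
  let ?L = "Linf_B1 f"
  have "\<exists>C\<in>LS f. C < ?L + 1 / Suc n" for n :: nat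
    unfolding Linf_B1_def LS_def[symmetric]
    by (rule cInf_lessD) (use M in auto)
  have hn: "AE x in lborel. x \<in> ball 0 1 \<longrightarrow> \<bar>f x\<bar> \<le> ?L + 1 / Suc n" for n :: nat
  proof -
    obtain C where C: "C \<in> LS f" "C < ?L + 1 / Suc n" using \<open>\<And>n. \<exists>C\<in>LS f. C < ?L + 1 / Suc n\<close> by blast
    then show ?thesis by (auto simp: LS_def elim!: eventually_mono)
  qed
  then have "AE x in lborel. \<forall>n::nat. x \<in> ball 0 1 \<longrightarrow> \<bar>f x\<bar> \<le> ?L + 1 / Suc n"
    by (intro AE_all_countable[THEN iffD2] allI hn)
  then show ?thesis
  proof (rule eventually_mono, intro impI)
    fix x assume A: "\<forall>n::nat. x \<in> ball 0 1 \<longrightarrow> \<bar>f x\<bar> \<le> ?L + 1 / Suc n" and x: "x \<in> ball 0 1"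
    show "\<bar>f x\<bar> \<le> ?L"
    proof (rule field_le_epsilon)
      fix e :: real assume "0 < e"
      then obtain n where n: "inverse (real (Suc n)) < e" using reals_Archimedean by blast
      have "\<bar>f x\<bar> \<le> ?L + 1 / Suc n" using A x by blast
      with n show "\<bar>f x\<bar> \<le> ?L + e" by (simp add: inverse_eq_divide)
    qed
  qed
qed


definition MS :: "real \<Rightarrow> (complex \<Rightarrow> real) \<Rightarrow> real set" where
  "MS \<kappa> f = {\<epsilon>. \<epsilon> > 0 \<and> (\<forall>x. \<bar>(1 / measure lborel (ball x \<epsilon>)) *
       (LINT y:ball x \<epsilon>|lborel. indicator (cball 0 1) y * f y)\<bar> \<le> \<kappa> * Linf_B1 f)}"

lemma mix_scale_MS: "mix_scale \<kappa> f = Inf (MS \<kappa> f)"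
  unfolding mix_scale_def MS_def ..

lemma mix_nonempty:
  assumes fm: "f \<in> borel_measurable lborel" and fb: "\<And>y. \<bar>f y\<bar> \<le> M"
    and k: "0 < \<kappa>" "\<kappa> \<le> 1"
  shows "1 / \<kappa> \<in> MS \<kappa> f"
proof -
  let ?L = "Linf_B1 f"
  have M0: "0 \<le> M" using fb[of 0] by linarith
  have L0: "0 \<le> ?L" using Linf_le[of f M] fb by auto
  have AEL: "AE y in lborel. \<bar>indicator (cball 0 1) y * f y\<bar> \<le> ?L * indicator (cball (0::complex) 1) y"
  proof -
    have "AE y in lborel. y \<notin> sphere (0::complex) 1"
      using sphere_null by (rule AE_not_in)
    moreover have "AE x in lborel. x \<in> ball 0 1 \<longrightarrow> \<bar>f x\<bar> \<le> ?L"
      by (rule Linf_attained[of f M]) (use fb in auto)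
    ultimately show ?thesis
      by eventually_elim (auto simp: indicator_def L0 dist_norm)
  qed
  have int1: "integrable lborel (\<lambda>y. indicator (cball 0 1) y * f y)"
    by (rule bdd_integrable[where A="cball 0 1" and B=M]) (use fm fb M0 emeasure_lborel_cball_finite in \<open>auto simp: indicator_def\<close>)
  have int2: "integrable lborel (\<lambda>y. ?L * indicator (cball (0::complex) 1) y)"
    using emeasure_lborel_cball_finite by (intro integrable_mult_right integrable_real_indicator) auto
  show ?thesis unfolding MS_def
  proof (intro CollectI conjI allI)
    show "0 < 1 / \<kappa>" using k by simp
    fix x :: complex
    let ?e = "1 / \<kappa>"
    have V: "measure lborel (ball x ?e) = pi * ?e^2" using k measure_ball_c[of "1/\<kappa>" x] by simp
    have "\<bar>LINT y:ball x ?e|lborel. indicator (cball 0 1) y * f y\<bar>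
        \<le> (LINT y|lborel. \<bar>indicator (ball x ?e) y * (indicator (cball 0 1) y * f y)\<bar>)"
      unfolding set_lebesgue_integral_def using integral_norm_bound by (simp del: real_norm_def) 
    also have "\<dots> \<le> (LINT y|lborel. ?L * indicator (cball (0::complex) 1) y)"
    proof (rule integral_mono_AE[OF _ int2])
      show "integrable lborel (\<lambda>y. \<bar>indicator (ball x ?e) y * (indicator (cball 0 1) y * f y)\<bar>)"
        by (rule bdd_integrable[where A="cball 0 1" and B=M]) (use fm fb M0 emeasure_lborel_cball_finite in \<open>auto simp: indicator_def\<close>)
      show "AE y in lborel. \<bar>indicator (ball x ?e) y * (indicator (cball 0 1) y * f y)\<bar> \<le> ?L * indicator (cball 0 1) y"
        using AEL by eventually_elim (auto simp: indicator_def abs_mult)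
    qed
    also have "\<dots> = ?L * pi" using measure_cball_c[of 1 0] emeasure_lborel_cball_finite
      by (simp add: integral_indicator)
    finally have I: "\<bar>LINT y:ball x ?e|lborel. indicator (cball 0 1) y * f y\<bar> \<le> ?L * pi" .
    have "\<bar>(1 / measure lborel (ball x ?e)) * (LINT y:ball x ?e|lborel. indicator (cball 0 1) y * f y)\<bar>
       = (\<kappa>^2 / pi) * \<bar>LINT y:ball x ?e|lborel. indicator (cball 0 1) y * f y\<bar>"
      unfolding V using k by (simp add: abs_mult power_divide)
    also have "\<dots> \<le> (\<kappa>^2 / pi) * (?L * pi)" using I by (intro mult_left_mono) auto
    also have "\<dots> = \<kappa>^2 * ?L" by simp
    also have "\<dots> \<le> \<kappa> * ?L" using k L0 by (intro mult_right_mono) (auto simp: power2_eq_square mult_le_cancel_left1)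
    finally show "\<bar>(1 / measure lborel (ball x ?e)) * (LINT y:ball x ?e|lborel. indicator (cball 0 1) y * f y)\<bar> \<le> \<kappa> * ?L" .
  qed
qed

lemma mix_small:
  assumes fm: "f \<in> borel_measurable lborel" and fb: "\<And>y. \<bar>f y\<bar> \<le> M"
    and k: "0 < \<kappa>" "\<kappa> \<le> 1" and d: "mix_scale \<kappa> f < \<delta>"
  shows "\<exists>\<epsilon>. 0 < \<epsilon> \<and> \<epsilon> < \<delta> \<and> (\<forall>x. \<bar>(1 / measure lborel (ball x \<epsilon>)) *
       (LINT y:ball x \<epsilon>|lborel. indicator (cball 0 1) y * f y)\<bar> \<le> \<kappa> * Linf_B1 f)"
proof -
  have "MS \<kappa> f \<noteq> {}" using mix_nonempty[OF fm fb k] by auto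
  then obtain e where "e \<in> MS \<kappa> f" "e < \<delta>"
    using cInf_lessD d unfolding mix_scale_MS by blast
  then show ?thesis unfolding MS_def by auto
qed


lemma ind_ball_meas[measurable]:
  "(\<lambda>p::complex \<times> complex. indicator (ball (fst p) e) (snd p) :: real) \<in> borel_measurable (lborel \<Otimes>\<^sub>M lborel)"
proof -
  have "{p::complex \<times> complex. dist (fst p) (snd p) < e} \<in> sets borel"
    by (intro borel_open open_Collect_less continuous_intros)
  then have S: "{p::complex \<times> complex. dist (fst p) (snd p) < e} \<in> sets (lborel \<Otimes>\<^sub>M lborel)"
    by (simp add: borel_prod[symmetric])
  have "(\<lambda>p::complex \<times> complex. indicator (ball (fst p) e) (snd p) :: real) = indicator {p. dist (fst p) (snd p) < e}"
    by (auto simp: fun_eq_iff indicator_def)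
  then show ?thesis using S by (simp add: borel_measurable_indicator)
qed

lemma prod_integrable:
  fixes G :: "complex \<times> complex \<Rightarrow> real"
  assumes "G \<in> borel_measurable (lborel \<Otimes>\<^sub>M lborel)"
    and "\<And>x y. \<bar>G (x,y)\<bar> \<le> C * indicator (cball 0 2 \<times> cball 0 1) (x,y)"
  shows "integrable (lborel \<Otimes>\<^sub>M lborel) G"
proof (rule bdd_integrable[OF assms(1)])
  show "cball 0 2 \<times> cball 0 1 \<in> sets (lborel \<Otimes>\<^sub>M lborel)" by simp
  show "emeasure (lborel \<Otimes>\<^sub>M lborel) (cball (0::complex) 2 \<times> cball (0::complex) 1) < \<infinity>"
    using emeasure_lborel_cball_finite[of "0::complex" 2] emeasure_lborel_cball_finite[of "0::complex" 1]
    by (simp add: lborel.emeasure_pair_measure_Times ennreal_mult_less_top)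
  show "\<bar>G p\<bar> \<le> C * indicator (cball 0 2 \<times> cball 0 1) p" for p
    using assms(2)[of "fst p" "snd p"] by simp
qed

lemma main_est:
  fixes f h :: "complex \<Rightarrow> real"
  assumes fm: "f \<in> borel_measurable lborel" and fb: "\<And>y. \<bar>f y\<bar> \<le> M"
    and hc: "continuous_on UNIV h"
    and e: "0 < \<epsilon>" "\<epsilon> \<le> 1"
    and eta: "\<And>x y. y \<in> cball 0 1 \<Longrightarrow> dist x y < \<epsilon> \<Longrightarrow> \<bar>h x - h y\<bar> \<le> \<eta>"
    and mixc: "\<And>x. \<bar>(1 / measure lborel (ball x \<epsilon>)) *
       (LINT y:ball x \<epsilon>|lborel. indicator (cball 0 1) y * f y)\<bar> \<le> K"
  shows "\<bar>LINT y|lborel. indicator (cball 0 1) y * f y * h y\<bar>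
          \<le> M * \<eta> * pi + K * (LINT x|lborel. indicator (cball 0 2) x * \<bar>h x\<bar>)"
proof -
  define F where "F y = indicator (cball 0 1) y * f y" for y
  define V where "V = pi * \<epsilon>^2"
  have V0: "0 < V" using e by (simp add: V_def)
  have mV: "measure lborel (ball x \<epsilon>) = V" for x :: complex using measure_ball_c[of \<epsilon> x] e by (simp add: V_def)
  have M0: "0 \<le> M" using fb[of 0] by linarith
  have eta0: "0 \<le> \<eta>" using eta[of 0 0] e by simp
  have Fm[measurable]: "F \<in> borel_measurable lborel" unfolding F_def using fm by (intro borel_measurable_times borel_measurable_indicator) auto
  have Fb: "\<bar>F y\<bar> \<le> M * indicator (cball 0 1) y" for y
    using fb[of y] M0 by (auto simp: F_def indicator_def)
  have hm[measurable]: "h \<in> borel_measurable lborel" using borel_measurable_continuous_onI[OF hc] by simp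
  obtain B where B: "\<And>x. x \<in> cball 0 2 \<Longrightarrow> \<bar>h x\<bar> \<le> B"
  proof -
    have "bounded (h ` cball 0 2)"
      using compact_imp_bounded[OF compact_continuous_image[OF continuous_on_subset[OF hc] compact_cball]]
      by auto
    then obtain B where "\<forall>x\<in>h ` cball 0 2. norm x \<le> B" by (auto simp: bounded_iff)
    then show ?thesis using that by (metis real_norm_def image_eqI)
  qed
  have B0: "0 \<le> B" using B[of 0] by simp
  have supp: "\<And>x y. indicator (ball x \<epsilon>) y * F y \<noteq> 0 \<Longrightarrow> x \<in> cball 0 2 \<and> y \<in> cball 0 1 \<and> dist x y < \<epsilon>"
  proof -
    fix x y :: complex assume "indicator (ball x \<epsilon>) y * F y \<noteq> 0"
    then have y: "y \<in> cball 0 1" "dist x y < \<epsilon>" by (auto simp: F_def indicator_def split: if_splits)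
    then have "norm x \<le> 2" using e norm_triangle_ineq2[of x y]
      by (simp add: dist_norm)
    with y show "x \<in> cball 0 2 \<and> y \<in> cball 0 1 \<and> dist x y < \<epsilon>" by simp
  qed
  define G1 where "G1 p = h (fst p) * (indicator (ball (fst p) \<epsilon>) (snd p) * F (snd p))" for p
  define G2 where "G2 p = h (snd p) * (indicator (ball (fst p) \<epsilon>) (snd p) * F (snd p))" for p
  define E where "E p = \<eta> * M * (indicator (ball (fst p) \<epsilon>) (snd p) * indicator (cball 0 1) (snd p))" for p :: "complex \<times> complex"
  have G1m[measurable]: "G1 \<in> borel_measurable (lborel \<Otimes>\<^sub>M lborel)" unfolding G1_def by measurable
  have G2m[measurable]: "G2 \<in> borel_measurable (lborel \<Otimes>\<^sub>M lborel)" unfolding G2_def by measurable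
  have Em[measurable]: "E \<in> borel_measurable (lborel \<Otimes>\<^sub>M lborel)" 
  proof -
    have ic: "(\<lambda>y::complex. indicator (cball 0 1) y :: real) \<in> borel_measurable lborel"
      by (rule borel_measurable_indicator) simp
    show ?thesis unfolding E_def
      by (intro borel_measurable_times borel_measurable_const ind_ball_meas measurable_compose[OF measurable_snd ic])
  qed
  have bndF: "\<bar>indicator (ball x \<epsilon>) y * F y\<bar> \<le> M" for x y
    using Fb[of y] M0 by (cases "norm y \<le> 1") (auto simp: indicator_def)
  have G1i: "integrable (lborel \<Otimes>\<^sub>M lborel) G1"
  proof (rule prod_integrable[OF G1m, where C="B*M"])
    fix x y :: complex
    show "\<bar>G1 (x, y)\<bar> \<le> B * M * indicator (cball 0 2 \<times> cball 0 1) (x, y)"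
    proof (cases "indicator (ball x \<epsilon>) y * F y = 0")
      case False
      then have xy: "x \<in> cball 0 2" "y \<in> cball 0 1" using supp[OF False] by auto
      have "\<bar>G1 (x, y)\<bar> = \<bar>h x\<bar> * \<bar>indicator (ball x \<epsilon>) y * F y\<bar>" by (simp add: G1_def abs_mult)
      also have "\<dots> \<le> B * M" using B[OF xy(1)] bndF[of x y] B0 by (intro mult_mono) auto
      finally show ?thesis using xy by simp
    next
      case True
      have "0 \<le> B * M * indicator (cball 0 2 \<times> cball 0 1) (x, y)" using B0 M0 by simp
      moreover have "G1 (x, y) = 0" using True by (simp add: G1_def)
      ultimately show ?thesis by simp
    qed
  qed
  have G2i: "integrable (lborel \<Otimes>\<^sub>M lborel) G2"
  proof (rule prod_integrable[OF G2m, where C="B*M"])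
    fix x y :: complex
    show "\<bar>G2 (x, y)\<bar> \<le> B * M * indicator (cball 0 2 \<times> cball 0 1) (x, y)"
    proof (cases "indicator (ball x \<epsilon>) y * F y = 0")
      case False
      then have xy: "x \<in> cball 0 2" "y \<in> cball 0 1" using supp[OF False] by auto
      have "\<bar>G2 (x, y)\<bar> = \<bar>h y\<bar> * \<bar>indicator (ball x \<epsilon>) y * F y\<bar>" by (simp add: G2_def abs_mult)
      also have "\<dots> \<le> B * M" using B[of y] xy bndF[of x y] B0 by (intro mult_mono) auto
      finally show ?thesis using xy by simp
    next
      case True
      have "0 \<le> B * M * indicator (cball 0 2 \<times> cball 0 1) (x, y)" using B0 M0 by simp
      moreover have "G2 (x, y) = 0" using True by (simp add: G2_def)
      ultimately show ?thesis by simp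
    qed
  qed
  have Ei: "integrable (lborel \<Otimes>\<^sub>M lborel) E"
  proof (rule prod_integrable[OF Em, where C="\<eta>*M"])
    fix x y :: complex
    show "\<bar>E (x, y)\<bar> \<le> \<eta> * M * indicator (cball 0 2 \<times> cball 0 1) (x, y)"
    proof (cases "y \<in> ball x \<epsilon> \<and> y \<in> cball 0 1")
      case True
      then have "x \<in> cball 0 2" using e norm_triangle_ineq2[of x y]
        by (simp add: dist_norm)
      then show ?thesis using True eta0 M0 by (simp add: E_def)
    next
      case False
      then show ?thesis using eta0 M0 by (auto simp: E_def indicator_def)
    qed
  qed
  have K0: "0 \<le> K" using mixc[of 0] by linarith
  have symb: "indicator (ball x \<epsilon>) y = (indicator (ball y \<epsilon>) x :: real)" for x y :: complex
    by (simp add: indicator_def dist_commute)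
  have intind: "(LINT x|lborel. indicator (ball y \<epsilon>) x :: real) = V" for y :: complex
    using emeasure_lborel_ball_finite[of y \<epsilon>] mV[of y] by (simp add: integral_indicator)
  have G2eq: "integral\<^sup>L (lborel \<Otimes>\<^sub>M lborel) G2 = V * (LINT y|lborel. F y * h y)"
  proof -
    have G2i': "integrable (lborel \<Otimes>\<^sub>M lborel) (\<lambda>(x, y). G2 (x, y))" using G2i by simp
    have "integral\<^sup>L (lborel \<Otimes>\<^sub>M lborel) G2 = (LINT x|lborel. LINT y|lborel. G2 (x, y))"
      using lborel_pair.integral_fst'[OF G2i] by simp
    also have "\<dots> = (LINT y|lborel. LINT x|lborel. G2 (x, y))"
      using lborel_pair.Fubini_integral[OF G2i'] by simp
    also have "\<dots> = (LINT y|lborel. V * (F y * h y))"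
    proof (rule Bochner_Integration.integral_cong[OF refl])
      fix y
      have "(LINT x|lborel. G2 (x, y)) = (LINT x|lborel. (h y * F y) * indicator (ball y \<epsilon>) x)"
        by (rule Bochner_Integration.integral_cong[OF refl]) (simp add: G2_def symb mult_ac)
      also have "\<dots> = (h y * F y) * V" using intind[of y] by simp
      finally show "(LINT x|lborel. G2 (x, y)) = V * (F y * h y)" by (simp add: mult_ac)
    qed
    also have "\<dots> = V * (LINT y|lborel. F y * h y)" by simp
    finally show ?thesis .
  qed
  define I where "I x = (LINT y:ball x \<epsilon>|lborel. F y)" for x
  have I_eq: "(LINT y|lborel. G1 (x, y)) = h x * I x" for x
    unfolding I_def set_lebesgue_integral_def by (simp add: G1_def)
  have G1eq: "integral\<^sup>L (lborel \<Otimes>\<^sub>M lborel) G1 = (LINT x|lborel. h x * I x)"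
    using lborel_pair.integral_fst'[OF G1i] by (simp add: I_eq)
  have hIi: "integrable lborel (\<lambda>x. h x * I x)"
    using lborel_pair.integrable_fst'[OF G1i] by (simp add: I_eq)
  have Hi: "integrable lborel (\<lambda>x. indicator (cball 0 2) x * \<bar>h x\<bar>)"
  proof -
    have "continuous_on (cball 0 2) (\<lambda>x. \<bar>h x\<bar>)"
      by (intro continuous_intros continuous_on_subset[OF hc]) auto
    then show ?thesis using borel_integrable_compact[OF compact_cball[of "0::complex" 2], of "\<lambda>x. \<bar>h x\<bar>"]
      by simp
  qed
  have Ibound: "\<bar>h x * I x\<bar> \<le> indicator (cball 0 2) x * \<bar>h x\<bar> * (K * V)" for x
  proof (cases "x \<in> cball 0 2")
    case True
    have "\<bar>(1 / V) * I x\<bar> \<le> K" using mixc[of x] unfolding mV I_def F_def .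
    then have "\<bar>I x\<bar> \<le> K * V" using V0 by (simp add: abs_mult field_simps)
    then have "\<bar>h x\<bar> * \<bar>I x\<bar> \<le> \<bar>h x\<bar> * (K * V)" by (rule mult_left_mono) simp
    moreover have "indicator (cball 0 2) x = (1::real)" using True by simp
    ultimately show ?thesis by (simp only: abs_mult mult_1_left)
  next
    case False
    have "I x = 0" unfolding I_def set_lebesgue_integral_def
    proof (rule integral_eq_zero_AE, rule AE_I2)
      fix y
      have "\<not> (indicator (ball x \<epsilon>) y * F y \<noteq> 0)"
      proof
        assume "indicator (ball x \<epsilon>) y * F y \<noteq> 0"
        from supp[OF this] False show False by blast
      qed
      then show "indicator (ball x \<epsilon>) y *\<^sub>R F y = 0" by simp
    qed
    then show ?thesis using False by simp
  qed
  have Abound: "\<bar>integral\<^sup>L (lborel \<Otimes>\<^sub>M lborel) G1\<bar> \<le> K * V * (LINT x|lborel. indicator (cball 0 2) x * \<bar>h x\<bar>)"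
  proof -
    have "\<bar>integral\<^sup>L (lborel \<Otimes>\<^sub>M lborel) G1\<bar> \<le> (LINT x|lborel. \<bar>h x * I x\<bar>)"
      unfolding G1eq using integral_norm_bound[of lborel "\<lambda>x. h x * I x"] by simp
    also have "\<dots> \<le> (LINT x|lborel. indicator (cball 0 2) x * \<bar>h x\<bar> * (K * V))"
      by (rule Bochner_Integration.integral_mono) (use hIi Hi Ibound in auto)
    also have "\<dots> = K * V * (LINT x|lborel. indicator (cball 0 2) x * \<bar>h x\<bar>)" by simp
    finally show ?thesis .
  qed
  have Eeq: "integral\<^sup>L (lborel \<Otimes>\<^sub>M lborel) E = \<eta> * M * V * pi"
  proof -
    have Ei': "integrable (lborel \<Otimes>\<^sub>M lborel) (\<lambda>(x, y). E (x, y))" using Ei by simp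
    have "integral\<^sup>L (lborel \<Otimes>\<^sub>M lborel) E = (LINT x|lborel. LINT y|lborel. E (x, y))"
      using lborel_pair.integral_fst'[OF Ei] by simp
    also have "\<dots> = (LINT y|lborel. LINT x|lborel. E (x, y))"
      using lborel_pair.Fubini_integral[OF Ei'] by simp
    also have "\<dots> = (LINT y|lborel. (\<eta> * M * V) * indicator (cball (0::complex) 1) y)"
    proof (rule Bochner_Integration.integral_cong[OF refl])
      fix y
      have "(LINT x|lborel. E (x, y)) = (LINT x|lborel. (\<eta> * M * indicator (cball 0 1) y) * indicator (ball y \<epsilon>) x)"
        by (rule Bochner_Integration.integral_cong[OF refl]) (simp add: E_def symb mult_ac)
      also have "\<dots> = (\<eta> * M * indicator (cball 0 1) y) * V" using intind[of y] by simp
      finally show "(LINT x|lborel. E (x, y)) = (\<eta> * M * V) * indicator (cball 0 1) y" by (simp add: mult_ac)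
    qed
    also have "\<dots> = \<eta> * M * V * pi"
      using emeasure_lborel_cball_finite[of "0::complex" 1] measure_cball_c[of 1 "0::complex"]
      by (simp add: integral_indicator)
    finally show ?thesis .
  qed
  have Cbound: "\<bar>integral\<^sup>L (lborel \<Otimes>\<^sub>M lborel) G1 - integral\<^sup>L (lborel \<Otimes>\<^sub>M lborel) G2\<bar> \<le> \<eta> * M * V * pi"
  proof -
    have "\<bar>integral\<^sup>L (lborel \<Otimes>\<^sub>M lborel) G1 - integral\<^sup>L (lborel \<Otimes>\<^sub>M lborel) G2\<bar>
        = \<bar>integral\<^sup>L (lborel \<Otimes>\<^sub>M lborel) (\<lambda>p. G1 p - G2 p)\<bar>"
      using G1i G2i by simp
    also have "\<dots> \<le> integral\<^sup>L (lborel \<Otimes>\<^sub>M lborel) (\<lambda>p. \<bar>G1 p - G2 p\<bar>)"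
      using integral_norm_bound[of "lborel \<Otimes>\<^sub>M lborel" "\<lambda>p. G1 p - G2 p"] by simp
    also have "\<dots> \<le> integral\<^sup>L (lborel \<Otimes>\<^sub>M lborel) E"
    proof (rule Bochner_Integration.integral_mono)
      show "integrable (lborel \<Otimes>\<^sub>M lborel) (\<lambda>p. \<bar>G1 p - G2 p\<bar>)" using G1i G2i by auto
      show "integrable (lborel \<Otimes>\<^sub>M lborel) E" by (rule Ei)
      fix p :: "complex \<times> complex"
      obtain x y where p: "p = (x, y)" by (cases p)
      show "\<bar>G1 p - G2 p\<bar> \<le> E p"
      proof (cases "indicator (ball x \<epsilon>) y * F y = 0")
        case True
        have "0 \<le> E p" using eta0 M0 by (simp add: E_def)
        moreover have "G1 p - G2 p = 0" using True by (simp add: p G1_def G2_def)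
        ultimately show ?thesis by simp
      next
        case False
        note s = supp[OF False]
        have "\<bar>G1 p - G2 p\<bar> = \<bar>h x - h y\<bar> * \<bar>indicator (ball x \<epsilon>) y * F y\<bar>"
          unfolding p G1_def G2_def fst_conv snd_conv left_diff_distrib[symmetric] abs_mult ..
        also have "\<dots> \<le> \<eta> * M" using eta[of y x] s bndF[of x y] eta0 by (intro mult_mono) auto
        also have "\<dots> = E p" using s by (simp add: p E_def)
        finally show ?thesis .
      qed
    qed
    also have "\<dots> = \<eta> * M * V * pi" by (rule Eeq)
    finally show ?thesis .
  qed
  have "V * \<bar>LINT y|lborel. F y * h y\<bar> = \<bar>integral\<^sup>L (lborel \<Otimes>\<^sub>M lborel) G2\<bar>"
    using V0 by (simp add: G2eq abs_mult)
  also have "\<dots> \<le> \<bar>integral\<^sup>L (lborel \<Otimes>\<^sub>M lborel) G1\<bar> + \<bar>integral\<^sup>L (lborel \<Otimes>\<^sub>M lborel) G1 - integral\<^sup>L (lborel \<Otimes>\<^sub>M lborel) G2\<bar>"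
    by linarith
  also have "\<dots> \<le> K * V * (LINT x|lborel. indicator (cball 0 2) x * \<bar>h x\<bar>) + \<eta> * M * V * pi"
    using Abound Cbound by linarith
  also have "\<dots> = V * (M * \<eta> * pi + K * (LINT x|lborel. indicator (cball 0 2) x * \<bar>h x\<bar>))"
    by (simp add: algebra_simps)
  finally have "\<bar>LINT y|lborel. F y * h y\<bar> \<le> M * \<eta> * pi + K * (LINT x|lborel. indicator (cball 0 2) x * \<bar>h x\<bar>)"
    using V0 by (simp add: mult_le_cancel_left_pos)
  then show ?thesis by (simp add: F_def)
qed


definition capprox :: "(complex \<Rightarrow> real) \<Rightarrow> bool" where
  "capprox g \<longleftrightarrow> (\<forall>e>0. \<exists>h. continuous_on UNIV h \<and> integrable lborel (\<lambda>x. g x - h x) \<and>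
      (LINT x|lborel. \<bar>g x - h x\<bar>) < e)"

lemma capprox_indicator:
  assumes A: "A \<in> sets lborel" "emeasure lborel A < \<infinity>"
  shows "capprox (\<lambda>x. indicator A x * c)"
  unfolding capprox_def
proof (intro allI impI)
  fix e :: real assume e: "0 < e"
  define e' where "e' = e / (\<bar>c\<bar> + 1)"
  have e': "0 < e'" using e by (simp add: e'_def)
  have AL: "A \<in> sets lebesgue" using A by simp
  obtain U where U: "open U" "A \<subseteq> U" "(U - A) \<in> lmeasurable" "emeasure lebesgue (U - A) < ennreal (e'/2)"
    using sets_lebesgue_outer_open[OF AL, of "e'/2"] e' by auto
  obtain K where K: "closed K" "K \<subseteq> A" "(A - K) \<in> lmeasurable" "emeasure lebesgue (A - K) < ennreal (e'/2)"
    using sets_lebesgue_inner_closed[OF AL, of "e'/2"] e' by auto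
  obtain f :: "complex \<Rightarrow> real" where f: "continuous_on UNIV f" "\<And>x. f x \<in> closed_segment 1 0"
      "\<And>x. x \<in> K \<Longrightarrow> f x = 1" "\<And>x. x \<in> - U \<Longrightarrow> f x = 0"
    using Urysohn[of K "- U" 1 0] K(1) U(1,2) K(2) by auto
  have f01: "0 \<le> f x" "f x \<le> 1" for x using f(2)[of x] by (auto simp: closed_segment_eq_real_ivl)
  have UKs: "U - K \<in> sets lborel" using U(1) K(1) by auto
  have "emeasure lebesgue (U - K) \<le> emeasure lebesgue (U - A) + emeasure lebesgue (A - K)"
  proof -
    have eq: "U - K = (U - A) \<union> (A - K)" using K(2) U(2) by auto
    show ?thesis unfolding eq
      by (rule emeasure_subadditive) (use U(3) K(3) in \<open>auto dest: fmeasurableD\<close>)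
  qed
  also have "\<dots> < ennreal (e'/2) + ennreal (e'/2)"
    using U(4) K(4) by (simp add: add_strict_mono)
  also have "\<dots> = ennreal e'" using e' by (simp flip: ennreal_plus)
  finally have UKl: "emeasure lborel (U - K) < ennreal e'" using UKs by (simp add: emeasure_completion)
  have UKf: "emeasure lborel (U - K) < \<infinity>" using less_trans[OF UKl ennreal_less_top] by simp
  have "emeasure lborel (U - K) = ennreal (measure lborel (U - K))"
    using UKf by (intro emeasure_eq_ennreal_measure) simp
  then have "ennreal (measure lborel (U - K)) < ennreal e'" using UKl by simp
  then have mUK: "measure lborel (U - K) < e'"
    by (subst (asm) ennreal_less_iff) auto
  have fm: "f \<in> borel_measurable lborel" using borel_measurable_continuous_onI[OF f(1)] by simp
  have pt: "\<bar>indicator A x * c - c * f x\<bar> \<le> \<bar>c\<bar> * indicator (U - K) x" for x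
  proof -
    have "\<bar>indicator A x - f x\<bar> \<le> indicator (U - K) x"
      using f(3)[of x] f(4)[of x] f01[of x] K(2) U(2) by (auto simp: indicator_def)
    then have "\<bar>c\<bar> * \<bar>indicator A x - f x\<bar> \<le> \<bar>c\<bar> * indicator (U - K) x" by (rule mult_left_mono) simp
    moreover have "\<bar>indicator A x * c - c * f x\<bar> = \<bar>c\<bar> * \<bar>indicator A x - f x\<bar>"
      by (metis abs_mult mult.commute right_diff_distrib)
    ultimately show ?thesis by simp
  qed
  have int: "integrable lborel (\<lambda>x. indicator A x * c - c * f x)"
    by (rule bdd_integrable[OF _ UKs UKf pt]) (use fm A in simp)
  have "(LINT x|lborel. \<bar>indicator A x * c - c * f x\<bar>) \<le> (LINT x|lborel. \<bar>c\<bar> * indicator (U - K) x)"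
    by (rule Bochner_Integration.integral_mono) (use int UKs UKf pt in auto)
  also have "\<dots> = \<bar>c\<bar> * measure lborel (U - K)" using UKs UKf by simp
  also have "\<dots> \<le> \<bar>c\<bar> * e'" using mUK by (intro mult_left_mono) auto
  also have "\<dots> < e" using e by (simp add: e'_def field_simps)
  finally show "\<exists>h. continuous_on UNIV h \<and> integrable lborel (\<lambda>x. indicator A x * c - h x) \<and>
      (LINT x|lborel. \<bar>indicator A x * c - h x\<bar>) < e"
    using int f(1) by (intro exI[of _ "\<lambda>x. c * f x"]) (auto intro: continuous_intros)
qed

lemma capprox_add:
  assumes "capprox f" "capprox g"
  shows "capprox (\<lambda>x. f x + g x)"
  unfolding capprox_def
proof (intro allI impI)
  fix e :: real assume e: "0 < e"
  obtain h1 where h1: "continuous_on UNIV h1" "integrable lborel (\<lambda>x. f x - h1 x)"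
      "(LINT x|lborel. \<bar>f x - h1 x\<bar>) < e/2"
    using assms(1) e unfolding capprox_def by (meson half_gt_zero)
  obtain h2 where h2: "continuous_on UNIV h2" "integrable lborel (\<lambda>x. g x - h2 x)"
      "(LINT x|lborel. \<bar>g x - h2 x\<bar>) < e/2"
    using assms(2) e unfolding capprox_def by (meson half_gt_zero)
  have eq: "(\<lambda>x. f x + g x - (h1 x + h2 x)) = (\<lambda>x. (f x - h1 x) + (g x - h2 x))" by auto
  have int: "integrable lborel (\<lambda>x. f x + g x - (h1 x + h2 x))"
    unfolding eq using h1(2) h2(2) by simp
  have "(LINT x|lborel. \<bar>f x + g x - (h1 x + h2 x)\<bar>) \<le> (LINT x|lborel. \<bar>f x - h1 x\<bar> + \<bar>g x - h2 x\<bar>)"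
    by (rule Bochner_Integration.integral_mono) (use int h1(2) h2(2) in auto)
  also have "\<dots> = (LINT x|lborel. \<bar>f x - h1 x\<bar>) + (LINT x|lborel. \<bar>g x - h2 x\<bar>)"
    using h1(2) h2(2) by (simp add: Bochner_Integration.integral_add)
  also have "\<dots> < e" using h1(3) h2(3) by simp
  finally show "\<exists>h. continuous_on UNIV h \<and> integrable lborel (\<lambda>x. f x + g x - h x) \<and>
      (LINT x|lborel. \<bar>f x + g x - h x\<bar>) < e"
    using int h1(1) h2(1) by (intro exI[of _ "\<lambda>x. h1 x + h2 x"]) (auto intro: continuous_intros)
qed

lemma capprox_lim:
  fixes f :: "complex \<Rightarrow> real"
  assumes si: "\<And>i. integrable lborel (s i)" and P: "\<And>i. capprox (s i)"
    and lim: "\<And>x. (\<lambda>i. s i x) \<longlonglongrightarrow> f x"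
    and bnd: "\<And>i x. \<bar>s i x\<bar> \<le> 2 * \<bar>f x\<bar>"
    and fi: "integrable lborel f"
  shows "capprox f"
  unfolding capprox_def
proof (intro allI impI)
  fix e :: real assume e: "0 < e"
  have "(\<lambda>i. LINT x|lborel. \<bar>s i x - f x\<bar>) \<longlonglongrightarrow> integral\<^sup>L lborel (\<lambda>x::complex. 0::real)"
  proof (rule integral_dominated_convergence[where w="\<lambda>x. 3 * \<bar>f x\<bar>"])
    show "(\<lambda>x. 0::real) \<in> borel_measurable lborel" by simp
    show "(\<lambda>x. \<bar>s i x - f x\<bar>) \<in> borel_measurable lborel" for i
      using si[of i] fi by (intro borel_measurable_abs borel_measurable_diff) auto
    show "integrable lborel (\<lambda>x. 3 * \<bar>f x\<bar>)" using fi by auto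
    show "AE x in lborel. (\<lambda>i. \<bar>s i x - f x\<bar>) \<longlonglongrightarrow> 0"
    proof (rule AE_I2)
      fix x
      have "(\<lambda>i. s i x - f x) \<longlonglongrightarrow> f x - f x" by (intro tendsto_intros lim)
      then have "(\<lambda>i. \<bar>s i x - f x\<bar>) \<longlonglongrightarrow> \<bar>f x - f x\<bar>" by (rule tendsto_rabs)
      then show "(\<lambda>i. \<bar>s i x - f x\<bar>) \<longlonglongrightarrow> 0" by simp
    qed
    show "AE x in lborel. norm \<bar>s i x - f x\<bar> \<le> 3 * \<bar>f x\<bar>" for i
      using bnd[of i] by (intro AE_I2) (smt (verit) real_norm_def)
  qed
  then have "(\<lambda>i. LINT x|lborel. \<bar>s i x - f x\<bar>) \<longlonglongrightarrow> 0" by simp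
  then obtain i where i: "(LINT x|lborel. \<bar>s i x - f x\<bar>) < e/2"
  proof -
    have "eventually (\<lambda>i. (LINT x|lborel. \<bar>s i x - f x\<bar>) < e/2) sequentially"
      using order_tendstoD(2)[OF \<open>(\<lambda>i. LINT x|lborel. \<bar>s i x - f x\<bar>) \<longlonglongrightarrow> 0\<close>, of "e/2"] e by simp
    then show ?thesis using that by (auto simp: eventually_sequentially)
  qed
  obtain h where h: "continuous_on UNIV h" "integrable lborel (\<lambda>x. s i x - h x)"
      "(LINT x|lborel. \<bar>s i x - h x\<bar>) < e/2"
    using P[of i] e unfolding capprox_def by (meson half_gt_zero)
  have eq: "(\<lambda>x. f x - h x) = (\<lambda>x. (f x - s i x) + (s i x - h x))" by auto
  have int1: "integrable lborel (\<lambda>x. f x - s i x)" using fi si[of i] by simp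
  have int: "integrable lborel (\<lambda>x. f x - h x)"
    unfolding eq by (rule Bochner_Integration.integrable_add[OF int1 h(2)])
  have "(LINT x|lborel. \<bar>f x - h x\<bar>) \<le> (LINT x|lborel. \<bar>s i x - f x\<bar> + \<bar>s i x - h x\<bar>)"
  proof (rule Bochner_Integration.integral_mono)
    show "integrable lborel (\<lambda>x. \<bar>s i x - f x\<bar> + \<bar>s i x - h x\<bar>)"
      by (rule Bochner_Integration.integrable_add[OF integrable_abs[OF Bochner_Integration.integrable_diff[OF si[of i] fi]] integrable_abs[OF h(2)]])
  qed (use int in auto)
  also have "\<dots> = (LINT x|lborel. \<bar>s i x - f x\<bar>) + (LINT x|lborel. \<bar>s i x - h x\<bar>)"
    by (rule Bochner_Integration.integral_add[OF integrable_abs[OF Bochner_Integration.integrable_diff[OF si[of i] fi]] integrable_abs[OF h(2)]])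
  also have "\<dots> < e" using i h(3) by simp
  finally show "\<exists>h. continuous_on UNIV h \<and> integrable lborel (\<lambda>x. f x - h x) \<and>
      (LINT x|lborel. \<bar>f x - h x\<bar>) < e"
    using int h(1) by blast
qed

lemma capprox_all:
  fixes g :: "complex \<Rightarrow> real"
  assumes "integrable lborel g"
  shows "capprox g"
  using assms
proof induct
  case (base A c)
  then show ?case using capprox_indicator[of A c] by simp
next
  case (add f g)
  show ?case by (rule capprox_add[OF add(2) add(4)])
next
  case (lim f s)
  show ?case
    by (rule capprox_lim[of s f]) (use lim in auto)
qed


lemma Linf_cong:
  assumes "AE x in lborel. f x = f' x"
  shows "Linf_B1 f = Linf_B1 f'"
proof -
  have "{C. AE x in lborel. x \<in> ball 0 1 \<longrightarrow> \<bar>f x\<bar> \<le> C} = {C. AE x in lborel. x \<in> ball 0 1 \<longrightarrow> \<bar>f' x\<bar> \<le> C}"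
  proof (intro Collect_cong iffI)
    fix C
    assume "AE x in lborel. x \<in> ball 0 1 \<longrightarrow> \<bar>f x\<bar> \<le> C"
    with assms show "AE x in lborel. x \<in> ball 0 1 \<longrightarrow> \<bar>f' x\<bar> \<le> C" by eventually_elim auto
  next
    fix C
    assume "AE x in lborel. x \<in> ball 0 1 \<longrightarrow> \<bar>f' x\<bar> \<le> C"
    with assms show "AE x in lborel. x \<in> ball 0 1 \<longrightarrow> \<bar>f x\<bar> \<le> C" by eventually_elim auto
  qed
  then show ?thesis unfolding Linf_B1_def by simp
qed

lemma mix_cong:
  assumes fm: "f \<in> borel_measurable lborel" and f'm: "f' \<in> borel_measurable lborel"
    and ae: "AE x in lborel. f x = f' x"
  shows "mix_scale \<kappa> f = mix_scale \<kappa> f'"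
proof -
  have L: "Linf_B1 f = Linf_B1 f'" by (rule Linf_cong[OF ae])
  have I: "(LINT y:ball x \<epsilon>|lborel. indicator (cball 0 1) y * f y) = (LINT y:ball x \<epsilon>|lborel. indicator (cball 0 1) y * f' y)" for x \<epsilon>
    unfolding set_lebesgue_integral_def
  proof (rule integral_cong_AE)
    show "(\<lambda>y. indicator (ball x \<epsilon>) y *\<^sub>R (indicator (cball 0 1) y * f y)) \<in> borel_measurable lborel"
      using fm by (intro borel_measurable_scaleR borel_measurable_times borel_measurable_indicator) auto
    show "(\<lambda>y. indicator (ball x \<epsilon>) y *\<^sub>R (indicator (cball 0 1) y * f' y)) \<in> borel_measurable lborel"
      using f'm by (intro borel_measurable_scaleR borel_measurable_times borel_measurable_indicator) auto
  qed (use ae in \<open>auto elim!: eventually_mono\<close>)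
  show ?thesis unfolding mix_scale_def L I ..
qed

definition trunc :: "real \<Rightarrow> (complex \<Rightarrow> real) \<Rightarrow> complex \<Rightarrow> real" where
  "trunc M f y = max (- M) (min M (f y))"

lemma trunc_props:
  assumes fm: "f \<in> borel_measurable lborel" and ae: "AE x in lborel. \<bar>f x\<bar> \<le> M"
  shows "trunc M f \<in> borel_measurable lborel" "\<And>y. \<bar>trunc M f y\<bar> \<le> M \<or> M < 0"
    "AE x in lborel. f x = trunc M f x"
proof -
  show "trunc M f \<in> borel_measurable lborel" unfolding trunc_def using fm by measurable
  show "\<bar>trunc M f y\<bar> \<le> M \<or> M < 0" for y by (auto simp: trunc_def)
  show "AE x in lborel. f x = trunc M f x" using ae by eventually_elim (auto simp: trunc_def)
qed

lemma key_bound: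
  fixes f h G0 :: "complex \<Rightarrow> real"
  assumes fm: "f \<in> borel_measurable lborel" and fb: "\<And>y. \<bar>f y\<bar> \<le> M"
    and hc: "continuous_on UNIV h" and G0i: "integrable lborel (\<lambda>x. G0 x - h x)"
    and G0m: "G0 \<in> borel_measurable lborel"
  shows "\<bar>LINT y|lborel. indicator (cball 0 1) y * f y * G0 y\<bar>
     \<le> \<bar>LINT y|lborel. indicator (cball 0 1) y * f y * h y\<bar> + M * (LINT y|lborel. \<bar>G0 y - h y\<bar>)"
proof -
  have M0: "0 \<le> M" using fb[of 0] by linarith
  have hm: "h \<in> borel_measurable lborel" using borel_measurable_continuous_onI[OF hc] by simp
  have Fm: "(\<lambda>y. indicator (cball 0 1) y * f y) \<in> borel_measurable lborel"
    using fm by (intro borel_measurable_times borel_measurable_indicator) auto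
  have i1: "integrable lborel (\<lambda>y. indicator (cball 0 1) y * f y * h y)"
  proof (rule Bochner_Integration.integrable_bound)
    show "integrable lborel (\<lambda>y. M * (indicator (cball 0 1) y *\<^sub>R \<bar>h y\<bar>))"
      using borel_integrable_compact[OF compact_cball[of "0::complex" 1], of "\<lambda>y. \<bar>h y\<bar>"]
        continuous_on_subset[OF hc, of "cball 0 1"]
      by (intro integrable_mult_right) (auto intro: continuous_intros)
    show "(\<lambda>y. indicator (cball 0 1) y * f y * h y) \<in> borel_measurable lborel"
      by (rule borel_measurable_times[OF Fm hm])
    show "AE x in lborel. norm (indicator (cball 0 1) x * f x * h x) \<le> norm (M * (indicator (cball 0 1) x *\<^sub>R \<bar>h x\<bar>))"
    proof (rule AE_I2)
      fix x
      have "\<bar>indicator (cball 0 1) x * f x * h x\<bar> = indicator (cball 0 1) x * (\<bar>f x\<bar> * \<bar>h x\<bar>)"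
        by (simp add: abs_mult)
      also have "\<dots> \<le> indicator (cball 0 1) x * (M * \<bar>h x\<bar>)"
        using fb[of x] by (intro mult_left_mono mult_right_mono) auto
      finally show "norm (indicator (cball 0 1) x * f x * h x) \<le> norm (M * (indicator (cball 0 1) x *\<^sub>R \<bar>h x\<bar>))"
        using M0 by (simp add: abs_mult mult_ac)
    qed
  qed
  have i2: "integrable lborel (\<lambda>y. indicator (cball 0 1) y * f y * (G0 y - h y))"
  proof (rule Bochner_Integration.integrable_bound)
    show "integrable lborel (\<lambda>y. M * \<bar>G0 y - h y\<bar>)" using G0i by auto
    show "(\<lambda>y. indicator (cball 0 1) y * f y * (G0 y - h y)) \<in> borel_measurable lborel"
      by (rule borel_measurable_times[OF Fm borel_measurable_diff[OF G0m hm]])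
    show "AE x in lborel. norm (indicator (cball 0 1) x * f x * (G0 x - h x)) \<le> norm (M * \<bar>G0 x - h x\<bar>)"
    proof (rule AE_I2)
      fix x
      have "\<bar>indicator (cball 0 1) x * f x\<bar> \<le> M" using fb[of x] M0 by (auto simp: indicator_def)
      then have "\<bar>indicator (cball 0 1) x * f x\<bar> * \<bar>G0 x - h x\<bar> \<le> M * \<bar>G0 x - h x\<bar>"
        by (rule mult_right_mono) simp
      then show "norm (indicator (cball 0 1) x * f x * (G0 x - h x)) \<le> norm (M * \<bar>G0 x - h x\<bar>)"
        using M0 by (simp add: abs_mult)
    qed
  qed
  have "(LINT y|lborel. indicator (cball 0 1) y * f y * G0 y)
      = (LINT y|lborel. indicator (cball 0 1) y * f y * h y) + (LINT y|lborel. indicator (cball 0 1) y * f y * (G0 y - h y))"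
    by (subst Bochner_Integration.integral_add[OF i1 i2, symmetric]) (simp add: algebra_simps)
  moreover have "\<bar>LINT y|lborel. indicator (cball 0 1) y * f y * (G0 y - h y)\<bar> \<le> M * (LINT y|lborel. \<bar>G0 y - h y\<bar>)"
  proof -
    have "\<bar>LINT y|lborel. indicator (cball 0 1) y * f y * (G0 y - h y)\<bar> \<le> (LINT y|lborel. \<bar>indicator (cball 0 1) y * f y * (G0 y - h y)\<bar>)"
      using integral_norm_bound[of lborel "\<lambda>y. indicator (cball 0 1) y * f y * (G0 y - h y)"] by simp
    also have "\<dots> \<le> (LINT y|lborel. M * \<bar>G0 y - h y\<bar>)"
    proof (rule Bochner_Integration.integral_mono)
      show "integrable lborel (\<lambda>y. \<bar>indicator (cball 0 1) y * f y * (G0 y - h y)\<bar>)" using i2 by auto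
      show "integrable lborel (\<lambda>y. M * \<bar>G0 y - h y\<bar>)" using G0i by auto
      fix x
      have "\<bar>indicator (cball 0 1) x * f x\<bar> \<le> M" using fb[of x] M0 by (auto simp: indicator_def)
      then have "\<bar>indicator (cball 0 1) x * f x\<bar> * \<bar>G0 x - h x\<bar> \<le> M * \<bar>G0 x - h x\<bar>"
        by (rule mult_right_mono) simp
      then show "\<bar>indicator (cball 0 1) x * f x * (G0 x - h x)\<bar> \<le> M * \<bar>G0 x - h x\<bar>"
        by (simp add: abs_mult)
    qed
    also have "\<dots> = M * (LINT y|lborel. \<bar>G0 y - h y\<bar>)" by simp
    finally show ?thesis .
  qed
  ultimately show ?thesis by linarith
qed

lemma abs_le_1_sq: "\<bar>a::real\<bar> \<le> 1 + a^2"
proof (cases "\<bar>a\<bar> \<le> 1")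
  case True then show ?thesis by (smt (verit) zero_le_power2)
next
  case False
  then have "\<bar>a\<bar> * 1 \<le> \<bar>a\<bar> * \<bar>a\<bar>" by (intro mult_left_mono) auto
  then show ?thesis by (simp add: power2_eq_square abs_mult_self_eq)
qed

theorem proposition4p1:
  fixes rho0 :: "complex \<Rightarrow> real"
  assumes meas: "rho0 \<in> borel_measurable lborel"
    and bdd: "\<exists>C. AE x in lborel. \<bar>rho0 x\<bar> \<le> C"
    and supp: "AE x in lborel. norm x > 1 \<longrightarrow> rho0 x = 0"
    and mix: "\<forall>\<kappa>. 0 < \<kappa> \<and> \<kappa> < 1 \<longrightarrow> ((\<lambda>t. mix_scale \<kappa> (sol rho0 t)) \<longlongrightarrow> 0) at_top"
  shows "\<forall>g :: complex \<Rightarrow> real. g \<in> borel_measurable lborel \<and>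
           set_integrable lborel (ball 0 1) (\<lambda>x. (g x)\<^sup>2) \<longrightarrow>
           ((\<lambda>t. LINT x:ball 0 1|lborel. sol rho0 t x * g x) \<longlongrightarrow> 0) at_top"
proof (intro allI impI)
  fix g :: "complex \<Rightarrow> real"
  assume gass: "g \<in> borel_measurable lborel \<and> set_integrable lborel (ball 0 1) (\<lambda>x. (g x)\<^sup>2)"
  then have gm: "g \<in> borel_measurable lborel" and g2: "integrable lborel (\<lambda>x. indicator (ball 0 1) x * (g x)\<^sup>2)"
    by (auto simp: set_integrable_def)
  obtain C0 where C0: "AE x in lborel. \<bar>rho0 x\<bar> \<le> C0" using bdd by blast
  define M where "M = max C0 0"
  have M0: "0 \<le> M" by (simp add: M_def)
  have AEM: "AE x in lborel. \<bar>rho0 x\<bar> \<le> M" using C0 by eventually_elim (auto simp: M_def)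
  have solAE: "AE x in lborel. \<bar>sol rho0 t x\<bar> \<le> M" for t
    unfolding sol_twist using twist_AE[OF AEM] .
  have solm: "sol rho0 t \<in> borel_measurable lborel" for t by (rule sol_meas[OF meas])
  define f' where "f' t = trunc M (sol rho0 t)" for t
  have f'm: "f' t \<in> borel_measurable lborel" for t
    unfolding f'_def using trunc_props[OF solm solAE] by blast
  have f'b: "\<bar>f' t y\<bar> \<le> M" for t y
    unfolding f'_def using trunc_props(2)[OF solm solAE, of t y] M0 by linarith
  have f'ae: "AE x in lborel. sol rho0 t x = f' t x" for t
    unfolding f'_def using trunc_props(3)[OF solm solAE] .
  define G0 where "G0 x = indicator (ball 0 1) x * g x" for x :: complex
  have G0m: "G0 \<in> borel_measurable lborel" unfolding G0_def using gm
    by (intro borel_measurable_times borel_measurable_indicator) auto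
  have G0int: "integrable lborel G0"
  proof (rule Bochner_Integration.integrable_bound[OF _ G0m])
    show "integrable lborel (\<lambda>x. indicator (ball 0 1) x + indicator (ball 0 1) x * (g x)\<^sup>2 :: real)"
      using g2 emeasure_lborel_ball_finite[of "0::complex" 1]
      by (intro Bochner_Integration.integrable_add integrable_real_indicator) auto
    show "AE x in lborel. norm (G0 x) \<le> norm (indicator (ball 0 1) x + indicator (ball 0 1) x * (g x)\<^sup>2 :: real)"
      by (intro AE_I2) (auto simp: G0_def indicator_def abs_le_1_sq abs_mult)
  qed
  have eqI: "(LINT x:ball 0 1|lborel. sol rho0 t x * g x) = (LINT y|lborel. indicator (cball 0 1) y * f' t y * G0 y)" for t
    unfolding set_lebesgue_integral_def
  proof (rule integral_cong_AE)
    show "(\<lambda>x. indicator (ball 0 1) x *\<^sub>R (sol rho0 t x * g x)) \<in> borel_measurable lborel"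
      using solm[of t] gm by (intro borel_measurable_scaleR borel_measurable_times borel_measurable_indicator) auto
    show "(\<lambda>y. indicator (cball 0 1) y * f' t y * G0 y) \<in> borel_measurable lborel"
      using f'm[of t] G0m by (intro borel_measurable_times borel_measurable_indicator) auto
    show "AE x in lborel. indicator (ball 0 1) x *\<^sub>R (sol rho0 t x * g x) = indicator (cball 0 1) x * f' t x * G0 x"
      using f'ae[of t] by eventually_elim (auto simp: G0_def indicator_def)
  qed
  show "((\<lambda>t. LINT x:ball 0 1|lborel. sol rho0 t x * g x) \<longlongrightarrow> 0) at_top"
    unfolding eqI
  proof (rule tendstoI)
    fix e :: real assume e: "0 < e"
    define e1 where "e1 = e / (3 * (M + 1))"
    have e1: "0 < e1" using e M0 by (simp add: e1_def)
    obtain h where h: "continuous_on UNIV h" "integrable lborel (\<lambda>x. G0 x - h x)"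
        "(LINT x|lborel. \<bar>G0 x - h x\<bar>) < e1"
      using capprox_all[OF G0int] e1 unfolding capprox_def by blast
    define H where "H = (LINT x|lborel. indicator (cball 0 2) x * \<bar>h x\<bar>)"
    have H0: "0 \<le> H" unfolding H_def by (intro Bochner_Integration.integral_nonneg) auto
    define \<kappa> where "\<kappa> = min (1/2) (e / (3 * (M+1) * (H+1)))"
    have k0: "0 < \<kappa>" "\<kappa> < 1" using e M0 H0 by (auto simp: \<kappa>_def)
    have kMH: "\<kappa> * M * H < e / 3"
    proof -
      have "\<kappa> * M * H \<le> (e / (3 * (M+1) * (H+1))) * (M * H)"
      proof -
        have "\<kappa> \<le> e / (3 * (M+1) * (H+1))" unfolding \<kappa>_def by simp
        then have "\<kappa> * (M * H) \<le> (e / (3 * (M+1) * (H+1))) * (M * H)"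
          by (rule mult_right_mono) (use M0 H0 in simp)
        then show ?thesis by (simp add: mult.assoc)
      qed
      also have "\<dots> < (e / (3 * (M+1) * (H+1))) * ((M+1) * (H+1))"
        using M0 H0 e by (intro mult_strict_left_mono) (auto simp: algebra_simps add_pos_nonneg)
      also have "\<dots> = e / 3"
      proof -
        define P where "P = (M+1) * (H+1)"
        have P: "P \<noteq> 0" using M0 H0 by (simp add: P_def add_nonneg_eq_0_iff)
        have "e / (3 * (M+1) * (H+1)) * ((M+1) * (H+1)) = e / (3 * P) * P"
          unfolding P_def by (simp only: mult.assoc)
        also have "\<dots> = e / 3" using P by simp
        finally show ?thesis .
      qed
      finally show ?thesis .
    qed
    define \<eta> where "\<eta> = e / (3 * (M+1) * pi)"
    have eta0: "0 < \<eta>" using e M0 by (simp add: \<eta>_def)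
    have Me1: "M * e1 < e / 3"
    proof -
      have Q: "M + 1 \<noteq> 0" using M0 by simp
      have "M * e1 = e / 3 * (M / (M + 1))" using Q by (simp add: e1_def field_simps)
      also have "\<dots> < e / 3 * 1" using M0 e by (intro mult_strict_left_mono) auto
      finally show ?thesis by simp
    qed
    have Meta: "M * \<eta> * pi < e / 3"
    proof -
      have "\<eta> * pi = e1" by (simp add: \<eta>_def e1_def)
      then have "M * \<eta> * pi = M * e1" by (simp only: mult.assoc)
      then show ?thesis using Me1 by (simp only:)
    qed
    have "uniformly_continuous_on (cball 0 2) h"
      by (rule compact_uniformly_continuous[OF continuous_on_subset[OF h(1)] compact_cball]) simp
    then obtain \<delta> where \<delta>: "0 < \<delta>" "\<And>x y. x \<in> cball 0 2 \<Longrightarrow> y \<in> cball 0 2 \<Longrightarrow> dist y x < \<delta> \<Longrightarrow> dist (h y) (h x) < \<eta>"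
      unfolding uniformly_continuous_on_def using eta0 by metis
    define \<delta>' where "\<delta>' = min \<delta> 1"
    have d': "0 < \<delta>'" using \<delta>(1) by (simp add: \<delta>'_def)
    have "((\<lambda>t. mix_scale \<kappa> (sol rho0 t)) \<longlongrightarrow> 0) at_top" using mix k0 by blast
    then have ev: "eventually (\<lambda>t. mix_scale \<kappa> (sol rho0 t) < \<delta>') at_top"
      using order_tendstoD(2) d' by blast
    then show "eventually (\<lambda>t. dist (LINT y|lborel. indicator (cball 0 1) y * f' t y * G0 y) 0 < e) at_top"
    proof (rule eventually_mono)
      fix t assume mt: "mix_scale \<kappa> (sol rho0 t) < \<delta>'"
      have "mix_scale \<kappa> (f' t) < \<delta>'" using mix_cong[OF solm[of t] f'm[of t] f'ae[of t], of \<kappa>] mt by simp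
      from mix_small[OF f'm f'b k0(1) less_imp_le[OF k0(2)] this]
      obtain \<epsilon> where eps: "0 < \<epsilon>" "\<epsilon> < \<delta>'" and mc: "\<And>x. \<bar>(1 / measure lborel (ball x \<epsilon>)) *
           (LINT y:ball x \<epsilon>|lborel. indicator (cball 0 1) y * f' t y)\<bar> \<le> \<kappa> * Linf_B1 (f' t)"
        by blast
      have LM: "Linf_B1 (f' t) \<le> M" using Linf_le(1)[of "f' t" M] f'b by auto
      have mc': "\<bar>(1 / measure lborel (ball x \<epsilon>)) *
           (LINT y:ball x \<epsilon>|lborel. indicator (cball 0 1) y * f' t y)\<bar> \<le> \<kappa> * M" for x
        using mc[of x] mult_left_mono[OF LM, of \<kappa>] k0 by linarith
      have etac: "\<bar>h x - h y\<bar> \<le> \<eta>" if y: "y \<in> cball 0 1" and xy: "dist x y < \<epsilon>" for x y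
      proof -
        have "dist x y < \<delta>" "dist x y < 1" using xy eps by (auto simp: \<delta>'_def)
        then have "x \<in> cball 0 2" using y norm_triangle_ineq2[of x y] by (simp add: dist_norm)
        moreover have "y \<in> cball 0 2" using y by simp
        ultimately have "dist (h x) (h y) < \<eta>" using \<delta>(2)[of y x] \<open>dist x y < \<delta>\<close> by blast
        then show ?thesis by (simp add: dist_real_def)
      qed
      have eps1: "\<epsilon> \<le> 1" using eps by (simp add: \<delta>'_def)
      have A: "\<bar>LINT y|lborel. indicator (cball 0 1) y * f' t y * h y\<bar> \<le> M * \<eta> * pi + \<kappa> * M * H"
        using main_est[OF f'm f'b h(1) eps(1) eps1 etac mc'] unfolding H_def by (simp add: mult_ac)
      have B: "\<bar>LINT y|lborel. indicator (cball 0 1) y * f' t y * G0 y\<bar>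
         \<le> \<bar>LINT y|lborel. indicator (cball 0 1) y * f' t y * h y\<bar> + M * (LINT y|lborel. \<bar>G0 y - h y\<bar>)"
        by (rule key_bound[OF f'm f'b h(1) h(2) G0m])
      have "M * (LINT y|lborel. \<bar>G0 y - h y\<bar>) \<le> M * e1" using h(3) M0 by (intro mult_left_mono) auto
      with A B Meta kMH Me1 show "dist (LINT y|lborel. indicator (cball 0 1) y * f' t y * G0 y) 0 < e"
        by (simp add: dist_real_def)
    qed
  qed
qed

end
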